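(* Let $F:[0,1]^n\to\mathbb{R}$ be twice differentiable, and let $\omega\in\mathbb{R}_{+}$ be such that for all $x\in[0,1]^n$ and all $i,j$, $\nabla^2F(x)_{i,i}=0$ and $\nabla^2F(x)_{i,j}\le\omega$. Then $F$ is $\left(\frac{n}{2}(n^{3/2}-1)\omega\right)$-up-concave.
   Context: $F:[0,1]^n\to\mathbb{R}$ is $\epsilon$-up-concave ($\epsilon\ge0$) if for every $u\in\mathbb{R}^n_{+}$, $x\in[0,1]^n$, the function $G_{x,u}(t)=F(tu+x)$ satisfies $G_{x,u}(\lambda t_1+(1-\lambda)t_2)\ge\lambda G_{x,u}(t_1)+(1-\lambda)G_{x,u}(t_2)-\epsilon$ for all $\lambda\in[0,1]$ and $t_1,t_2\in\mathbb{R}$ such that $t_1u+x$, $t_2u+x$, and $x+\lambda t_1u+(1-\lambda)t_2u$ lie in $[0,1]^n$. *)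

theory Defs
  imports "HOL-Analysis.Analysis"
begin

definition unit_cube :: "(real ^ 'n) set" where
  "unit_cube = {x. \<forall>i. 0 \<le> x $ i \<and> x $ i \<le> 1}"

definition twice_differentiable_with ::
  "(real ^ 'n \<Rightarrow> real) \<Rightarrow> (real ^ 'n \<Rightarrow> real ^ 'n)
   \<Rightarrow> (real ^ 'n \<Rightarrow> real ^ 'n ^ 'n) \<Rightarrow> (real ^ 'n) set \<Rightarrow> bool" where
  "twice_differentiable_with F G H S \<longleftrightarrow>
     (\<forall>x\<in>S. (F has_derivative (\<lambda>h. G x \<bullet> h)) (at x within S) \<and>
             (G has_derivative (\<lambda>h. H x *v h)) (at x within S))"

definition up_concave :: "real \<Rightarrow> (real ^ 'n \<Rightarrow> real) \<Rightarrow> bool" where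
  "up_concave \<epsilon> F \<longleftrightarrow>
     (\<forall>u x. (\<forall>i. 0 \<le> u $ i) \<longrightarrow> x \<in> unit_cube \<longrightarrow>
        (\<forall>lam t1 t2. 0 \<le> lam \<and> lam \<le> 1 \<and>
            t1 *\<^sub>R u + x \<in> unit_cube \<and> t2 *\<^sub>R u + x \<in> unit_cube \<and>
            x + (lam * t1 + (1 - lam) * t2) *\<^sub>R u \<in> unit_cube \<longrightarrow>
            F ((lam * t1 + (1 - lam) * t2) *\<^sub>R u + x)
              \<ge> lam * F (t1 *\<^sub>R u + x) + (1 - lam) * F (t2 *\<^sub>R u + x) - \<epsilon>))"

end

theory Submission
  imports Defs
begin

lemma oneD:
  fixes g g' g'' :: "real \<Rightarrow> real"
  assumes ab: "a \<le> b"
    and d1: "\<And>s. s \<in> {a..b} \<Longrightarrow> (g has_real_derivative g' s) (at s within {a..b})"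
    and d2: "\<And>s. s \<in> {a..b} \<Longrightarrow> (g' has_real_derivative g'' s) (at s within {a..b})"
    and M: "\<And>s. s \<in> {a..b} \<Longrightarrow> g'' s \<le> M"
    and l: "0 \<le> l" "l \<le> 1"
  shows "l * g a + (1 - l) * g b - g (l * a + (1 - l) * b) \<le> M * (l * (1 - l) * (b - a)^2) / 2"
proof -
  define k where "k s = M * s^2 / 2 - g s" for s
  define k' where "k' s = M * s - g' s" for s
  have dk: "(k has_real_derivative k' s) (at s within S)" if "s \<in> {a..b}" "S \<subseteq> {a..b}" for s S
  proof -
    have "(k has_real_derivative k' s) (at s within {a..b})"
      unfolding k_def[abs_def] k'_def
      using d1[OF that(1)] by (auto intro!: derivative_eq_intros simp: power2_eq_square)
    then show ?thesis using that has_field_derivative_subset by blast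
  qed
  have dk': "(k' has_real_derivative (M - g'' s)) (at s within S)" if "s \<in> {a..b}" "S \<subseteq> {a..b}" for s S
  proof -
    have "(k' has_real_derivative (M - g'' s)) (at s within {a..b})"
      unfolding k'_def[abs_def]
      using d2[OF that(1)] by (auto intro!: derivative_eq_intros)
    then show ?thesis using that has_field_derivative_subset by blast
  qed
  have mono: "k' p \<le> k' q" if "a \<le> p" "p < q" "q \<le> b" for p q
  proof -
    have "\<exists>z\<in>{p<..<q}. k' q - k' p = (\<lambda>h. (M - g'' z) * h) (q - p)"
      apply (rule mvt_simple[OF \<open>p < q\<close>])
      using dk'[of _ "{p..q}"] that unfolding has_field_derivative_def
      by auto
    then obtain z where z: "z \<in> {p<..<q}" "k' q - k' p = (M - g'' z) * (q - p)" by auto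
    have "g'' z \<le> M" using M z that by auto
    then have "0 \<le> (M - g'' z) * (q - p)" using that by simp
    then show ?thesis using z by linarith
  qed
  have conv: "(b - t) * k a + (t - a) * k b \<ge> (b - a) * k t" if t: "a < t" "t < b" for t
  proof -
    have "\<exists>z\<in>{a<..<t}. k t - k a = (\<lambda>h. k' z * h) (t - a)"
      apply (rule mvt_simple[OF \<open>a < t\<close>])
      using dk[of _ "{a..t}"] that unfolding has_field_derivative_def
      by auto
    then obtain z1 where z1: "z1 \<in> {a<..<t}" "k t - k a = k' z1 * (t - a)" by auto
    have "\<exists>z\<in>{t<..<b}. k b - k t = (\<lambda>h. k' z * h) (b - t)"
      apply (rule mvt_simple[OF \<open>t < b\<close>])
      using dk[of _ "{t..b}"] that unfolding has_field_derivative_def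
      by auto
    then obtain z2 where z2: "z2 \<in> {t<..<b}" "k b - k t = k' z2 * (b - t)" by auto
    have "k' z1 \<le> k' z2" using mono[of z1 z2] z1 z2 by auto
    then have "(k t - k a) * (b - t) \<le> (k b - k t) * (t - a)"
      using z1 z2 t by (simp add: mult_right_mono mult.assoc mult.left_commute)
    then show ?thesis by (simp add: algebra_simps)
  qed
  define t where "t = l * a + (1 - l) * b"
  have key: "k t \<le> l * k a + (1 - l) * k b"
  proof (cases "l = 0 \<or> l = 1 \<or> a = b")
    case True then show ?thesis unfolding t_def by (auto simp: algebra_simps)
  next
    case False
    then have "a < b" "0 < l" "l < 1" using ab l by auto
    then have "0 < (1 - l) * (b - a)" "0 < l * (b - a)" by simp_all
    then have t: "a < t" "t < b" unfolding t_def by (simp_all add: algebra_simps)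
    have "(b - a) * k t \<le> (b - t) * k a + (t - a) * k b" using conv[OF t] .
    also have "\<dots> = (b - a) * (l * k a + (1 - l) * k b)" unfolding t_def by (simp add: algebra_simps)
    finally show ?thesis using \<open>a < b\<close> by simp
  qed
  have id: "l * a^2 + (1 - l) * b^2 - t^2 = l * (1 - l) * (b - a)^2"
    unfolding t_def by (simp add: power2_eq_square algebra_simps)
  have "M * (l * a^2 + (1 - l) * b^2 - t^2) / 2 = M * (l * (1 - l) * (b - a)^2) / 2"
    using id by simp
  moreover have "l * g a + (1 - l) * g b - g t \<le> M * (l * a^2 + (1 - l) * b^2 - t^2) / 2"
    using key unfolding k_def by (simp add: algebra_simps add_divide_distrib diff_divide_distrib)
  ultimately show ?thesis unfolding t_def[symmetric] by linarith
qed

lemma sum_offdiag: "(\<Sum>i\<in>(UNIV::'n::finite set). \<Sum>j\<in>UNIV. (if i = j then 0 else 1::real)) = real CARD('n) * (real CARD('n) - 1)"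
proof -
  have "(\<Sum>j\<in>(UNIV::'n set). (if i = j then 0 else 1::real)) = real CARD('n) - 1" for i
  proof -
    have "(\<Sum>j\<in>(UNIV::'n set). (if i = j then 0 else 1::real)) = (\<Sum>j\<in>(UNIV::'n set). 1 - (if i = j then 1 else 0))"
      by (rule sum.cong) auto
    also have "\<dots> = real CARD('n) - 1" by (simp add: sum_subtractf)
    finally show ?thesis .
  qed
  then show ?thesis by simp
qed

lemma line_bound:
  fixes F :: "real ^ 'n \<Rightarrow> real"
    and G :: "real ^ 'n \<Rightarrow> real ^ 'n"
    and H :: "real ^ 'n \<Rightarrow> real ^ 'n ^ 'n"
    and \<omega> :: real
  assumes tw: "twice_differentiable_with F G H unit_cube"
    and w0: "0 \<le> \<omega>"
    and hd: "\<And>x i. x \<in> unit_cube \<Longrightarrow> H x $ i $ i = 0"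
    and ho: "\<And>x i j. x \<in> unit_cube \<Longrightarrow> H x $ i $ j \<le> \<omega>"
    and u: "\<And>i. 0 \<le> u $ i"
    and ab: "a \<le> b"
    and ca: "a *\<^sub>R u + x \<in> unit_cube" and cb: "b *\<^sub>R u + x \<in> unit_cube"
    and l: "0 \<le> l" "l \<le> 1"
  shows "l * F (a *\<^sub>R u + x) + (1 - l) * F (b *\<^sub>R u + x) - F ((l * a + (1 - l) * b) *\<^sub>R u + x)
     \<le> \<omega> * (real CARD('n) * (real CARD('n) - 1)) / 8"
proof -
  define g where "g t = F (t *\<^sub>R u + x)" for t
  define g' where "g' t = G (t *\<^sub>R u + x) \<bullet> u" for t
  define g'' where "g'' t = (H (t *\<^sub>R u + x) *v u) \<bullet> u" for t
  define M where "M = \<omega> * (\<Sum>i\<in>UNIV. \<Sum>j\<in>UNIV. (if i = j then 0 else u $ i * u $ j))"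
  have seg: "t *\<^sub>R u + x \<in> unit_cube" if "t \<in> {a..b}" for t
  proof -
    have "a * u $ i \<le> t * u $ i" "t * u $ i \<le> b * u $ i" for i
      using that u[of i] by (auto intro: mult_right_mono)
    then show ?thesis using ca cb unfolding unit_cube_def
      by (auto simp: algebra_simps) (smt (verit))+
  qed
  have Fd: "\<And>y. y \<in> unit_cube \<Longrightarrow> (F has_derivative (\<lambda>h. G y \<bullet> h)) (at y within unit_cube)"
    and Gd: "\<And>y. y \<in> unit_cube \<Longrightarrow> (G has_derivative (\<lambda>h. H y *v h)) (at y within unit_cube)"
    using tw unfolding twice_differentiable_with_def by auto
  have lin: "((\<lambda>t. t *\<^sub>R u + x) has_derivative (\<lambda>h. h *\<^sub>R u)) (at s within {a..b})" for s
    by (auto intro!: derivative_eq_intros)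
  have img: "(\<lambda>t. t *\<^sub>R u + x) ` {a..b} \<subseteq> unit_cube" using seg by auto
  have d1: "(g has_real_derivative g' s) (at s within {a..b})" if "s \<in> {a..b}" for s
  proof -
    have "((\<lambda>t. F (t *\<^sub>R u + x)) has_derivative (\<lambda>h. G (s *\<^sub>R u + x) \<bullet> (h *\<^sub>R u))) (at s within {a..b})"
      by (rule has_derivative_in_compose2[OF Fd img that lin])
    then show ?thesis unfolding has_field_derivative_def g_def[abs_def] g'_def
      by (rule has_derivative_eq_rhs) (auto simp: fun_eq_iff)
  qed
  have d2: "(g' has_real_derivative g'' s) (at s within {a..b})" if "s \<in> {a..b}" for s
  proof -
    have "((\<lambda>t. G (t *\<^sub>R u + x)) has_derivative (\<lambda>h. H (s *\<^sub>R u + x) *v (h *\<^sub>R u))) (at s within {a..b})"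
      by (rule has_derivative_in_compose2[OF Gd img that lin])
    then have "((\<lambda>t. G (t *\<^sub>R u + x) \<bullet> u) has_derivative (\<lambda>h. (H (s *\<^sub>R u + x) *v (h *\<^sub>R u)) \<bullet> u)) (at s within {a..b})"
      by (rule has_derivative_inner_left)
    then show ?thesis unfolding has_field_derivative_def g'_def[abs_def] g''_def
      by (rule has_derivative_eq_rhs) (auto simp: fun_eq_iff matrix_vector_mult_def inner_vec_def sum_distrib_left algebra_simps)
  qed
  have gM: "g'' s \<le> M" if "s \<in> {a..b}" for s
  proof -
    have y: "s *\<^sub>R u + x \<in> unit_cube" using seg that .
    have "g'' s = (\<Sum>i\<in>UNIV. \<Sum>j\<in>UNIV. H (s *\<^sub>R u + x) $ i $ j * u $ j * u $ i)"
      by (simp add: g''_def matrix_vector_mult_def inner_vec_def sum_distrib_right)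
    also have "\<dots> \<le> (\<Sum>i\<in>UNIV. \<Sum>j\<in>UNIV. \<omega> * (if i = j then 0 else u $ i * u $ j))"
    proof (intro sum_mono)
      fix i j
      show "H (s *\<^sub>R u + x) $ i $ j * u $ j * u $ i \<le> \<omega> * (if i = j then 0 else u $ i * u $ j)"
      proof (cases "i = j")
        case True then show ?thesis using hd[OF y] by simp
      next
        case False
        have "H (s *\<^sub>R u + x) $ i $ j * (u $ j * u $ i) \<le> \<omega> * (u $ j * u $ i)"
          by (rule mult_right_mono[OF ho[OF y]]) (simp add: u)
        then show ?thesis using False by (simp add: algebra_simps)
      qed
    qed
    also have "\<dots> = M" by (simp add: M_def sum_distrib_left)
    finally show ?thesis .
  qed
  have main: "l * g a + (1 - l) * g b - g (l * a + (1 - l) * b) \<le> M * (l * (1 - l) * (b - a)^2) / 2"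
    by (rule oneD[OF ab d1 d2 gM l])
  have step: "(b - a) * u $ i \<le> 1" for i
    using ca cb unfolding unit_cube_def by (auto simp: algebra_simps) (smt (verit))
  have "M * (b - a)^2 = \<omega> * (\<Sum>i\<in>UNIV. \<Sum>j\<in>UNIV. (if i = j then 0 else ((b - a) * u $ i) * ((b - a) * u $ j)))"
    by (simp add: M_def sum_distrib_left sum_distrib_right power2_eq_square algebra_simps if_distrib cong: if_cong)
  also have "\<dots> \<le> \<omega> * (\<Sum>i\<in>(UNIV::'n set). \<Sum>j\<in>UNIV. (if i = j then 0 else 1))"
  proof (intro mult_left_mono[OF _ w0] sum_mono)
    fix i j :: 'n
    have "0 \<le> (b - a) * u $ i" "0 \<le> (b - a) * u $ j" using ab u by simp_all
    then show "(if i = j then 0 else ((b - a) * u $ i) * ((b - a) * u $ j)) \<le> (if i = j then 0 else 1)"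
      using step[of i] step[of j] by (auto intro: mult_le_one)
  qed
  also have "\<dots> = \<omega> * (real CARD('n) * (real CARD('n) - 1))" by (simp add: sum_offdiag)
  finally have Mb: "M * (b - a)^2 \<le> \<omega> * (real CARD('n) * (real CARD('n) - 1))" .
  have M0: "0 \<le> M * (b - a)^2"
    unfolding M_def using w0 u by (auto intro!: sum_nonneg mult_nonneg_nonneg)
  have "0 \<le> (l - 1/2) * (l - 1/2)" by simp
  then have ll1: "l * (1 - l) \<le> 1/4" by (simp add: algebra_simps)
  have ll2: "0 \<le> l * (1 - l)" using l by simp
  note ll = ll1 ll2
  have E: "M * (l * (1 - l) * (b - a)^2) = (l * (1 - l)) * (M * (b - a)^2)" by (simp add: mult_ac)
  have "(l * (1 - l)) * (M * (b - a)^2) \<le> (1/4) * (\<omega> * (real CARD('n) * (real CARD('n) - 1)))"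
    by (rule mult_mono'[OF ll1 Mb ll2 M0])
  then have "M * (l * (1 - l) * (b - a)^2) / 2 \<le> \<omega> * (real CARD('n) * (real CARD('n) - 1)) / 8"
    using E by linarith
  then show ?thesis using main unfolding g_def by linarith
qed


lemma num_bound:
  assumes "0 \<le> (\<omega>::real)"
  shows "\<omega> * (real CARD('n::finite) * (real CARD('n) - 1)) / 8 \<le> real CARD('n) / 2 * (real CARD('n) powr (3/2) - 1) * \<omega>"
proof -
  define n where "n = real CARD('n)"
  have n1: "1 \<le> n" unfolding n_def by (simp add: Suc_le_eq)
  have "n powr 1 \<le> n powr (3/2)" by (rule powr_mono) (use n1 in auto)
  then have p: "n \<le> n powr (3/2)" using n1 by simp
  have "n * (n - 1) / 8 \<le> n / 2 * (n powr (3/2) - 1)"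
  proof -
    have "n * (n - 1) \<le> n * (n powr (3/2) - 1)" using p n1 by (intro mult_left_mono) auto
    moreover have "0 \<le> n * (n - 1)" using n1 by simp
    ultimately show ?thesis by simp
  qed
  then have "\<omega> * (n * (n - 1) / 8) \<le> \<omega> * (n / 2 * (n powr (3/2) - 1))"
    using assms by (rule mult_left_mono)
  then show ?thesis unfolding n_def[symmetric] by (simp add: mult_ac)
qed

theorem mainTheorem7:
  fixes F :: "real ^ 'n \<Rightarrow> real"
    and G :: "real ^ 'n \<Rightarrow> real ^ 'n"
    and H :: "real ^ 'n \<Rightarrow> real ^ 'n ^ 'n"
    and \<omega> :: real
  assumes "twice_differentiable_with F G H unit_cube"
    and "0 \<le> \<omega>"
    and "\<And>x i. x \<in> unit_cube \<Longrightarrow> H x $ i $ i = 0"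
    and "\<And>x i j. x \<in> unit_cube \<Longrightarrow> H x $ i $ j \<le> \<omega>"
  shows "up_concave (real CARD('n) / 2 * (real CARD('n) powr (3/2) - 1) * \<omega>) F"
  unfolding up_concave_def
proof (intro allI impI, elim conjE)
  fix u x :: "real ^ 'n" and lam t1 t2 :: real
  assume u: "\<forall>i. 0 \<le> u $ i" and x: "x \<in> unit_cube" and l: "0 \<le> lam" "lam \<le> 1"
    and c1: "t1 *\<^sub>R u + x \<in> unit_cube" and c2: "t2 *\<^sub>R u + x \<in> unit_cube"
    and "x + (lam * t1 + (1 - lam) * t2) *\<^sub>R u \<in> unit_cube"
  have nb: "\<omega> * (real CARD('n) * (real CARD('n) - 1)) / 8 \<le> real CARD('n) / 2 * (real CARD('n) powr (3/2) - 1) * \<omega>"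
    by (rule num_bound) fact
  have "lam * F (t1 *\<^sub>R u + x) + (1 - lam) * F (t2 *\<^sub>R u + x) - F ((lam * t1 + (1 - lam) * t2) *\<^sub>R u + x)
     \<le> \<omega> * (real CARD('n) * (real CARD('n) - 1)) / 8"
  proof (cases "t1 \<le> t2")
    case True
    show ?thesis by (rule line_bound[OF assms u[rule_format] True c1 c2 l])
  next
    case False
    have "(1 - lam) * F (t2 *\<^sub>R u + x) + (1 - (1 - lam)) * F (t1 *\<^sub>R u + x) - F (((1 - lam) * t2 + (1 - (1 - lam)) * t1) *\<^sub>R u + x)
     \<le> \<omega> * (real CARD('n) * (real CARD('n) - 1)) / 8"
      by (rule line_bound[OF assms u[rule_format] _ c2 c1]) (use False l in auto)
    then show ?thesis by (simp add: algebra_simps)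
  qed
  then show "lam * F (t1 *\<^sub>R u + x) + (1 - lam) * F (t2 *\<^sub>R u + x) - real CARD('n) / 2 * (real CARD('n) powr (3 / 2) - 1) * \<omega>
      \<le> F ((lam * t1 + (1 - lam) * t2) *\<^sub>R u + x)" using nb by linarith
qed

end
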